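(* Let $\Sigma$ be a non-pure shellable rational pointed fan in $\mathbb{R}^d$ with non-pure shelling $C_1,\dots,C_s$. Then there exists a permutation $\sigma$ of $\{1,\dots,s\}$ such that $C_{\sigma(1)},\dots,C_{\sigma(s)}$ is a non-pure shelling of $\Sigma$ and $\dim C_{\sigma(1)}\ge\dots\ge\dim C_{\sigma(s)}$.
   Context: A rational pointed fan $\Sigma$ in $\mathbb{R}^d$ is a finite collection of rational pointed polyhedral cones closed under taking faces, such that the intersection of two cones of $\Sigma$ is a common face of both. Facets are maximal cones. For a cone $C$, $\mathrm{fan}(C)$ is the fan of all faces of $C$ and $\mathrm{fan}(\partial C)$ the fan of all proper faces of $C$. A shelling of a pure $k$-dimensional fan is a linear ordering $C_1,\dots,C_s$ of its facets such that either $k=0$, or: (1) $\mathrm{fan}(\partial C_1)$ has a shelling, and (2) for $1<j\le s$ the fan $\mathrm{fan}(\partial C_j)$ is pure $(k-1)$-dimensional and there is a shelling $D_1,\dots,D_{t_j}$ of $\mathrm{fan}(\partial C_j)$ with $\emptyset\neq\bigcup_{i=1}^{j-1}[\mathrm{fan}(C_i)\cap\mathrm{fan}(C_j)]=\bigcup_{l=1}^{r_j}\mathrm{fan}(D_l)$ for some $1\le r_j\le t_j$. A (not necessarily pure) fan $\Sigma$ is non-pure shellable if there is a linear ordering $C_1,\dots,C_s$ of its facets (a non-pure shelling) such that either $\dim\Sigma=0$, or: (1) $\mathrm{fan}(\partial C_1)$ has a shelling, and (2) for $1<j\le s$ there is a shelling $D_1,\dots,D_{t_j}$ of the pure fan $\mathrm{fan}(\partial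 C_j)$ with $\emptyset\neq\bigcup_{i=1}^{j-1}[\mathrm{fan}(C_i)\cap\mathrm{fan}(C_j)]=\bigcup_{l=1}^{r_j}\mathrm{fan}(D_l)$ for some $1\le r_j\le t_j$. *)

theory Defs
  imports "HOL-Analysis.Analysis" "HOL-Combinatorics.Permutations"
begin

definition rational_pointed_cone :: "(real ^ 'd) set \<Rightarrow> bool" where
  "rational_pointed_cone C \<longleftrightarrow>
     (\<exists>S. finite S \<and> (\<forall>v\<in>S. \<forall>i. v $ i \<in> \<rat>) \<and> C = convex_cone hull S)
     \<and> (\<forall>x. x \<in> C \<and> - x \<in> C \<longrightarrow> x = 0)"

definition cone_face :: "(real ^ 'd) set \<Rightarrow> (real ^ 'd) set \<Rightarrow> bool" where
  "cone_face F C \<longleftrightarrow> F face_of C \<and> F \<noteq> {}"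

definition fan_of :: "(real ^ 'd) set \<Rightarrow> (real ^ 'd) set set" where
  "fan_of C = {F. cone_face F C}"

definition fan_bd :: "(real ^ 'd) set \<Rightarrow> (real ^ 'd) set set" where
  "fan_bd C = {F. cone_face F C \<and> F \<noteq> C}"

definition rational_pointed_fan :: "(real ^ 'd) set set \<Rightarrow> bool" where
  "rational_pointed_fan \<Sigma> \<longleftrightarrow>
     finite \<Sigma> \<and> (\<forall>C\<in>\<Sigma>. rational_pointed_cone C)
     \<and> (\<forall>C\<in>\<Sigma>. \<forall>F. cone_face F C \<longrightarrow> F \<in> \<Sigma>)
     \<and> (\<forall>C\<in>\<Sigma>. \<forall>C'\<in>\<Sigma>. cone_face (C \<inter> C') C \<and> cone_face (C \<inter> C') C')"

definition facets :: "(real ^ 'd) set set \<Rightarrow> (real ^ 'd) set set" where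
  "facets \<Sigma> = {C\<in>\<Sigma>. \<forall>C'\<in>\<Sigma>. C \<subseteq> C' \<longrightarrow> C' = C}"

definition pure_fan :: "nat \<Rightarrow> (real ^ 'd) set set \<Rightarrow> bool" where
  "pure_fan k \<Sigma> \<longleftrightarrow> (\<forall>C\<in>facets \<Sigma>. aff_dim C = int k)"

definition fan_dim :: "(real ^ 'd) set set \<Rightarrow> int" where
  "fan_dim \<Sigma> = Max (aff_dim ` \<Sigma>)"

definition facet_ordering :: "(real ^ 'd) set set \<Rightarrow> (real ^ 'd) set list \<Rightarrow> bool" where
  "facet_ordering \<Sigma> L \<longleftrightarrow> distinct L \<and> set L = facets \<Sigma>"

text \<open>The union over i<j of fan(C_i) \<inter> fan(C_j) (0-based indices).\<close>

definition shared :: "(real ^ 'd) set list \<Rightarrow> nat \<Rightarrow> (real ^ 'd) set set" where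
  "shared L j = (\<Union>i<j. fan_of (L ! i) \<inter> fan_of (L ! j))"

fun is_shelling :: "nat \<Rightarrow> (real ^ 'd) set set \<Rightarrow> (real ^ 'd) set list \<Rightarrow> bool" where
  "is_shelling 0 \<Sigma> L \<longleftrightarrow> pure_fan 0 \<Sigma> \<and> facet_ordering \<Sigma> L"
| "is_shelling (Suc k) \<Sigma> L \<longleftrightarrow> pure_fan (Suc k) \<Sigma> \<and> facet_ordering \<Sigma> L \<and> L \<noteq> []
     \<and> (\<exists>D. is_shelling k (fan_bd (L ! 0)) D)
     \<and> (\<forall>j. 0 < j \<and> j < length L \<longrightarrow>
          (\<exists>D r. is_shelling k (fan_bd (L ! j)) D \<and> 1 \<le> r \<and> r \<le> length D
                 \<and> shared L j \<noteq> {} \<and> shared L j = (\<Union>l<r. fan_of (D ! l))))"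

definition nonpure_shelling :: "(real ^ 'd) set set \<Rightarrow> (real ^ 'd) set list \<Rightarrow> bool" where
  "nonpure_shelling \<Sigma> L \<longleftrightarrow> facet_ordering \<Sigma> L \<and>
     (fan_dim \<Sigma> = 0 \<or>
      (L \<noteq> [] \<and> (\<exists>k D. is_shelling k (fan_bd (L ! 0)) D)
       \<and> (\<forall>j. 0 < j \<and> j < length L \<longrightarrow>
          (\<exists>k D r. is_shelling k (fan_bd (L ! j)) D \<and> 1 \<le> r \<and> r \<le> length D
                 \<and> shared L j \<noteq> {} \<and> shared L j = (\<Union>l<r. fan_of (D ! l))))))"

definition nonpure_shellable :: "(real ^ 'd) set set \<Rightarrow> bool" where
  "nonpure_shellable \<Sigma> \<longleftrightarrow> (\<exists>L. nonpure_shelling \<Sigma> L)"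

end

theory Submission
  imports Defs "HOL-Combinatorics.List_Permutation"
begin

lemma shelling_facets: "is_shelling k S D \<Longrightarrow> set D = facets S"
  by (cases k) (auto simp: facet_ordering_def)

lemma cone_poly:
  assumes "rational_pointed_cone C"
  shows "polyhedron C" "convex C"
proof -
  obtain S where "finite S" "C = convex_cone hull S"
    using assms unfolding rational_pointed_cone_def by blast
  then show "polyhedron C" "convex C"
    by (auto simp: polyhedron_convex_cone_hull convex_convex_cone_hull)
qed

lemma facet_bd_dim:
  assumes "polyhedron C" "F \<in> facets (fan_bd C)"
  shows "aff_dim F = aff_dim C - 1"
proof -
  have F: "F face_of C" "F \<noteq> {}" "F \<noteq> C" "\<forall>G\<in>fan_bd C. F \<subseteq> G \<longrightarrow> G = F"
    using assms(2) by (auto simp: facets_def fan_bd_def cone_face_def)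
  obtain G where G: "G facet_of C" "F \<subseteq> G"
    using face_of_polyhedron_subset_facet[OF assms(1) F(1,2,3)] by blast
  have "G \<noteq> C" using G(1) by (auto simp: facet_of_def)
  hence "G \<in> fan_bd C" using G(1) by (auto simp: facet_of_def fan_bd_def cone_face_def)
  hence "G = F" using F(4) G(2) by blast
  thus ?thesis using G(1) by (simp add: facet_of_def)
qed

lemma swap_step:
  assumes fan: "rational_pointed_fan \<Sigma>" and sh: "nonpure_shelling \<Sigma> L"
    and jn: "Suc j < length L" and dj: "aff_dim (L!j) < aff_dim (L!Suc j)"
  shows "nonpure_shelling \<Sigma> (L[j := L!Suc j, Suc j := L!j])"
proof -
  define A where "A = L!j"
  define B where "B = L!Suc j"
  define L' where "L' = L[j := B, Suc j := A]"
  have len: "length L' = length L" by (simp add: L'_def)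
  have L'j: "L'!j = B" and L'Sj: "L'!Suc j = A" using jn by (auto simp: L'_def nth_list_update)
  have L'o: "\<And>i. i \<noteq> j \<Longrightarrow> i \<noteq> Suc j \<Longrightarrow> L'!i = L!i" by (simp add: L'_def)
  have fo: "facet_ordering \<Sigma> L" using sh by (simp add: nonpure_shelling_def)
  hence dist: "distinct L" and setL: "set L = facets \<Sigma>" by (auto simp: facet_ordering_def)
  have fo': "facet_ordering \<Sigma> L'"
    using fo jn unfolding facet_ordering_def L'_def A_def B_def
    by (metis Suc_lessD distinct_swap set_swap)
  have inS: "\<And>i. i < length L \<Longrightarrow> L!i \<in> \<Sigma>" "\<And>i. i < length L \<Longrightarrow> L!i \<in> facets \<Sigma>"
    using setL nth_mem by (metis (no_types, lifting) facets_def mem_Collect_eq)+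
  have AS: "A \<in> facets \<Sigma>" "B \<in> facets \<Sigma>" using inS jn A_def B_def by auto
  have AB: "A \<noteq> B" using dist jn unfolding A_def B_def by (simp add: nth_eq_iff_index_eq)
  have nAB: "\<not> A \<subseteq> B" using AS AB by (auto simp: facets_def)
  have rpc: "\<And>C. C \<in> \<Sigma> \<Longrightarrow> rational_pointed_cone C" using fan by (simp add: rational_pointed_fan_def)
  have cvx: "\<And>C. C \<in> \<Sigma> \<Longrightarrow> convex C" "\<And>C. C \<in> \<Sigma> \<Longrightarrow> polyhedron C"
    using cone_poly rpc by auto
  have inter: "\<And>C C'. C \<in> \<Sigma> \<Longrightarrow> C' \<in> \<Sigma> \<Longrightarrow> cone_face (C \<inter> C') C \<and> cone_face (C \<inter> C') C'"
    using fan by (simp add: rational_pointed_fan_def)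
  have ASig: "A \<in> \<Sigma>" "B \<in> \<Sigma>" using AS by (auto simp: facets_def)
  show ?thesis
  proof (cases "fan_dim \<Sigma> = 0")
    case True
    then show ?thesis using fo' by (simp add: nonpure_shelling_def L'_def A_def B_def)
  next
    case False
    have cond: "\<And>p. 0 < p \<Longrightarrow> p < length L \<Longrightarrow> (\<exists>k D r. is_shelling k (fan_bd (L ! p)) D \<and> 1 \<le> r \<and> r \<le> length D
                 \<and> shared L p \<noteq> {} \<and> shared L p = (\<Union>l<r. fan_of (D ! l)))"
      using sh False by (simp add: nonpure_shelling_def)
    have first: "\<exists>k D. is_shelling k (fan_bd (L ! 0)) D" and Lne: "L \<noteq> []"
      using sh False by (auto simp: nonpure_shelling_def)
    obtain k D r where kD: "is_shelling k (fan_bd B) D" "1 \<le> r" "r \<le> length D"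
      "shared L (Suc j) = (\<Union>l<r. fan_of (D ! l))"
      using cond[of "Suc j"] jn B_def by auto
    have "A \<inter> B \<in> shared L (Suc j)"
      using inter[OF ASig] unfolding shared_def fan_of_def A_def B_def by auto
    then obtain l where l: "l < r" "A \<inter> B \<in> fan_of (D!l)" using kD(4) by auto
    have Dl: "D!l \<in> facets (fan_bd B)" using shelling_facets[OF kD(1)] l kD(3) by auto
    have dimDl: "aff_dim (D!l) = aff_dim B - 1" using facet_bd_dim[OF cvx(2)[OF ASig(2)] Dl] .
    have Dlf: "D!l face_of B" "D!l \<noteq> {}" using Dl by (auto simp: facets_def fan_bd_def cone_face_def)
    have "D!l \<in> fan_of (D!l)" using Dlf face_of_imp_convex face_of_refl
      by (auto simp: fan_of_def cone_face_def)
    hence "D!l \<in> shared L (Suc j)" using kD(4) l by auto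
    then obtain i where i: "i < Suc j" "D!l face_of L!i"
      unfolding shared_def fan_of_def cone_face_def by auto
    have "i \<noteq> j"
    proof
      assume "i = j"
      hence "D!l face_of A" using i A_def by simp
      moreover have "D!l \<noteq> A" using nAB Dlf face_of_imp_subset by blast
      ultimately have "aff_dim (D!l) < aff_dim A" using face_of_aff_dim_lt cvx ASig by blast
      thus False using dimDl dj A_def B_def by simp
    qed
    hence ij: "i < j" using i by simp
    have s1: "A \<inter> B \<subseteq> D!l" using l face_of_imp_subset by (auto simp: fan_of_def cone_face_def)
    have s2: "D!l \<subseteq> L!i" using i face_of_imp_subset by blast
    have ABsub: "A \<inter> B \<subseteq> L!i" using s1 s2 by blast
    have Li: "L!i \<in> \<Sigma>" using inS ij jn by simp
    have key1: "\<And>F. F \<in> fan_of A \<Longrightarrow> F \<in> fan_of B \<Longrightarrow> F \<in> fan_of (L!i) \<inter> fan_of B"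
    proof -
      fix F assume F: "F \<in> fan_of A" "F \<in> fan_of B"
      hence F': "F face_of A" "F face_of B" "F \<noteq> {}" by (auto simp: fan_of_def cone_face_def)
      have "F \<subseteq> L!i \<inter> B" using ABsub F' face_of_imp_subset by blast
      hence "F face_of (L!i \<inter> B)" using F' face_of_subset by blast
      hence "F face_of L!i" using inter[OF Li ASig(2)] face_of_trans by (auto simp: cone_face_def)
      thus "F \<in> fan_of (L!i) \<inter> fan_of B" using F F' by (auto simp: fan_of_def cone_face_def)
    qed
    have key2: "\<And>F. F \<in> fan_of A \<Longrightarrow> F \<in> fan_of B \<Longrightarrow> F \<in> fan_of (L!i) \<inter> fan_of A"
    proof -
      fix F assume F: "F \<in> fan_of A" "F \<in> fan_of B"
      hence F': "F face_of A" "F face_of B" "F \<noteq> {}" by (auto simp: fan_of_def cone_face_def)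
      have "F \<subseteq> L!i \<inter> A" using ABsub F' face_of_imp_subset by blast
      hence "F face_of (L!i \<inter> A)" using F' face_of_subset by blast
      hence "F face_of L!i" using inter[OF Li ASig(1)] face_of_trans by (auto simp: cone_face_def)
      thus "F \<in> fan_of (L!i) \<inter> fan_of A" using F F' by (auto simp: fan_of_def cone_face_def)
    qed
    have S1: "shared L' j = shared L (Suc j)"
    proof -
      have "shared L' j = (\<Union>i'<j. fan_of (L!i') \<inter> fan_of B)"
        unfolding shared_def using L'j L'o by auto
      also have "\<dots> = shared L (Suc j)"
        unfolding shared_def B_def[symmetric] using key1 ij A_def
        by (auto simp: lessThan_Suc)
      finally show ?thesis .
    qed
    have S2: "shared L' (Suc j) = shared L j"
    proof -
      have "shared L' (Suc j) = (\<Union>i'<j. fan_of (L!i') \<inter> fan_of A) \<union> (fan_of B \<inter> fan_of A)"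
        unfolding shared_def using L'j L'Sj L'o by (auto simp: lessThan_Suc)
      also have "\<dots> = shared L j"
        unfolding shared_def A_def[symmetric] using key2 ij
        by auto
      finally show ?thesis .
    qed
    have S3: "\<And>p. p < j \<Longrightarrow> shared L' p = shared L p"
      unfolding shared_def using L'o by auto
    have S4: "\<And>p. Suc j < p \<Longrightarrow> p < length L \<Longrightarrow> shared L' p = shared L p"
    proof -
      fix p assume p: "Suc j < p" "p < length L"
      define sw where "sw = (\<lambda>i::nat. if i = j then Suc j else if i = Suc j then j else i)"
      have e1: "\<And>i. i < p \<Longrightarrow> sw i < p \<and> L'!i = L!(sw i)"
        using p L'j L'Sj L'o A_def B_def by (auto simp: sw_def)
      have e2: "\<And>i. i < p \<Longrightarrow> sw i < p \<and> L!i = L'!(sw i)"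
        using p L'j L'Sj L'o A_def B_def by (auto simp: sw_def)
      have Lp: "L'!p = L!p" using p L'o by simp
      show "shared L' p = shared L p"
        unfolding shared_def Lp
      proof (intro equalityI subsetI)
        fix x assume "x \<in> (\<Union>i<p. fan_of (L' ! i) \<inter> fan_of (L ! p))"
        then obtain i where "i < p" "x \<in> fan_of (L' ! i) \<inter> fan_of (L ! p)" by auto
        thus "x \<in> (\<Union>i<p. fan_of (L ! i) \<inter> fan_of (L ! p))" using e1[of i] by auto
      next
        fix x assume "x \<in> (\<Union>i<p. fan_of (L ! i) \<inter> fan_of (L ! p))"
        then obtain i where "i < p" "x \<in> fan_of (L ! i) \<inter> fan_of (L ! p)" by auto
        thus "x \<in> (\<Union>i<p. fan_of (L' ! i) \<inter> fan_of (L ! p))" using e2[of i] by auto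
      qed
    qed
    have j0: "0 < j" using ij by simp
    have "nonpure_shelling \<Sigma> L'"
      unfolding nonpure_shelling_def
    proof (intro conjI disjI2 allI impI fo')
      show "L' \<noteq> []" using Lne by (simp add: L'_def)
      show "\<exists>k D. is_shelling k (fan_bd (L' ! 0)) D" using first L'o j0 by simp
    next
      fix p assume p: "0 < p \<and> p < length L'"
      show "\<exists>k D r. is_shelling k (fan_bd (L' ! p)) D \<and> 1 \<le> r \<and> r \<le> length D
                 \<and> shared L' p \<noteq> {} \<and> shared L' p = (\<Union>l<r. fan_of (D ! l))"
      proof -
        consider "p < j" | "p = j" | "p = Suc j" | "Suc j < p" by linarith
        thus ?thesis
        proof cases
          case 1 thus ?thesis using cond[of p] S3[of p] L'o[of p] p len by auto
        next
          case 2 thus ?thesis using cond[of "Suc j"] S1 L'j B_def jn by auto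
        next
          case 3 thus ?thesis using cond[of j] S2 L'Sj A_def jn j0 by auto
        next
          case 4 thus ?thesis using cond[of p] S4[of p] L'o[of p] p len by auto
        qed
      qed
    qed
    thus ?thesis by (simp add: L'_def A_def B_def)
  qed
qed


definition phi :: "(real ^ 'd) set list \<Rightarrow> nat" where
  "phi L = (\<Sum>i<length L. i * nat (aff_dim (L!i) + 1))"

lemma sum_split2:
  fixes f :: "nat \<Rightarrow> nat"
  shows "Suc j < n \<Longrightarrow> (\<Sum>i<n. f i) = (\<Sum>i\<in>{..<n}-{j,Suc j}. f i) + f j + f (Suc j)"
  by (subst sum.subset_diff[of "{j,Suc j}" "{..<n}"]) auto

lemma phi_dec:
  assumes jn: "Suc j < length L" and dj: "aff_dim (L!j) < aff_dim (L!Suc j)"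
  shows "phi (L[j := L!Suc j, Suc j := L!j]) < phi L"
proof -
  define L' where "L' = L[j := L!Suc j, Suc j := L!j]"
  define a where "a = nat (aff_dim (L!j) + 1)"
  define b where "b = nat (aff_dim (L!Suc j) + 1)"
  have ab: "a < b" using dj aff_dim_geq[of "L!j"] by (simp add: a_def b_def)
  have len: "length L' = length L" by (simp add: L'_def)
  have eq: "(\<Sum>i\<in>{..<length L}-{j,Suc j}. i * nat (aff_dim (L'!i) + 1))
          = (\<Sum>i\<in>{..<length L}-{j,Suc j}. i * nat (aff_dim (L!i) + 1))"
    by (rule sum.cong) (auto simp: L'_def)
  have "phi L' = (\<Sum>i\<in>{..<length L}-{j,Suc j}. i * nat (aff_dim (L!i) + 1)) + j * b + Suc j * a"
    unfolding phi_def len using sum_split2[OF jn, of "\<lambda>i. i * nat (aff_dim (L'!i) + 1)"] eq jn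
    by (simp add: L'_def a_def b_def)
  moreover have "phi L = (\<Sum>i\<in>{..<length L}-{j,Suc j}. i * nat (aff_dim (L!i) + 1)) + j * a + Suc j * b"
    unfolding phi_def using sum_split2[OF jn, of "\<lambda>i. i * nat (aff_dim (L!i) + 1)"]
    by (simp add: a_def b_def)
  moreover have "j * b + Suc j * a < j * a + Suc j * b" using ab by simp
  ultimately show ?thesis unfolding L'_def by linarith
qed

lemma sorted_exists:
  assumes fan: "rational_pointed_fan \<Sigma>"
  shows "nonpure_shelling \<Sigma> L \<Longrightarrow> \<exists>L'. nonpure_shelling \<Sigma> L' \<and> mset L' = mset L \<and>
     (\<forall>j. Suc j < length L' \<longrightarrow> aff_dim (L'!Suc j) \<le> aff_dim (L'!j))"
proof (induction "phi L" arbitrary: L rule: less_induct)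
  case less
  show ?case
  proof (cases "\<exists>j. Suc j < length L \<and> aff_dim (L!j) < aff_dim (L!Suc j)")
    case True
    then obtain j where j: "Suc j < length L" "aff_dim (L!j) < aff_dim (L!Suc j)" by blast
    define L' where "L' = L[j := L!Suc j, Suc j := L!j]"
    have "nonpure_shelling \<Sigma> L'" using swap_step[OF fan less.prems j] by (simp add: L'_def)
    moreover have "phi L' < phi L" using phi_dec[OF j] by (simp add: L'_def)
    ultimately obtain L'' where "nonpure_shelling \<Sigma> L''" "mset L'' = mset L'"
      "\<forall>j. Suc j < length L'' \<longrightarrow> aff_dim (L''!Suc j) \<le> aff_dim (L''!j)"
      using less.hyps by blast
    moreover have "mset L' = mset L" unfolding L'_def using j(1) mset_swap[of "Suc j" L j] list_update_swap[of j "Suc j" L] by simp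
    ultimately show ?thesis by auto
  next
    case False
    hence "\<forall>j. Suc j < length L \<longrightarrow> aff_dim (L!Suc j) \<le> aff_dim (L!j)" by (metis not_less)
    thus ?thesis using less.prems by blast
  qed
qed

lemma adj_sorted:
  assumes "\<forall>j. Suc j < length L \<longrightarrow> (f (L!Suc j) :: int) \<le> f (L!j)"
  shows "i \<le> j \<Longrightarrow> j < length L \<Longrightarrow> f (L!j) \<le> f (L!i)"
proof (induction j)
  case 0 thus ?case by simp
next
  case (Suc j)
  show ?case
  proof (cases "i = Suc j")
    case False
    hence "f (L!j) \<le> f (L!i)" using Suc by simp
    thus ?thesis using assms Suc.prems by force
  qed simp
qed

theorem lemma3p3:
  fixes \<Sigma> :: "(real ^ 'd) set set" and L :: "(real ^ 'd) set list"
  assumes "rational_pointed_fan \<Sigma>"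
    and "nonpure_shellable \<Sigma>"
    and "nonpure_shelling \<Sigma> L"
  shows "\<exists>\<sigma>. \<sigma> permutes {..<length L}
           \<and> nonpure_shelling \<Sigma> (map (\<lambda>i. L ! \<sigma> i) [0..<length L])
           \<and> (\<forall>i j. i \<le> j \<and> j < length L \<longrightarrow> aff_dim (L ! \<sigma> j) \<le> aff_dim (L ! \<sigma> i))"
proof -
  obtain L' where L': "nonpure_shelling \<Sigma> L'" "mset L' = mset L"
    "\<forall>j. Suc j < length L' \<longrightarrow> aff_dim (L'!Suc j) \<le> aff_dim (L'!j)"
    using sorted_exists[OF assms(1) assms(3)] by blast
  obtain p where p: "p permutes {..<length L}" "permute_list p L = L'"
    using mset_eq_permutation[OF L'(2)] by blast
  have eq: "map (\<lambda>i. L ! p i) [0..<length L] = L'" using p(2) by (simp add: permute_list_def)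
  have len: "length L' = length L" using L'(2) by (metis size_mset)
  have nth: "\<And>i. i < length L \<Longrightarrow> L ! p i = L' ! i" unfolding eq[symmetric] by simp
  show ?thesis
  proof (intro exI conjI allI impI)
    show "p permutes {..<length L}" by (rule p(1))
    show "nonpure_shelling \<Sigma> (map (\<lambda>i. L ! p i) [0..<length L])" using eq L'(1) by simp
    fix i j assume ij: "i \<le> j \<and> j < length L"
    thus "aff_dim (L ! p j) \<le> aff_dim (L ! p i)"
      using adj_sorted[of L' aff_dim i j] L'(3) len nth by simp
  qed
qed

end
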